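(* Let $T$ be a balanced tree of height 3. Suppose that (1) for all $u\in V_2$, $|N(u)\cap V_1|=1$, and (2) for all $s\in V_1$, $|N(s)\cap V_2|\le 1$. Then $T$ is unmixed.
   Context: $N(v)=\{u:uv\in E\}$, $N(D)=\bigcup_{v\in D}N(v)$. A leaf is a vertex of degree 1; the height of a vertex is its minimum distance to a leaf; $V_k$ is the set of vertices of height $k$; the height of $T$ is the maximum height of a vertex; $T$ is balanced if no two adjacent vertices have the same height. A TD-set is $D$ with $N(D)=V$, minimal if no proper subset is a TD-set; $T$ is unmixed if all minimal TD-sets have the same size. *)

theory Defs
  imports Main
begin

definition simple_graph :: "'a set \<Rightarrow> ('a \<times> 'a) set \<Rightarrow> bool" where
  "simple_graph V E \<longleftrightarrow> finite V \<and> E \<subseteq> V \<times> V \<and> sym E \<and> irrefl E"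

definition connected_graph :: "'a set \<Rightarrow> ('a \<times> 'a) set \<Rightarrow> bool" where
  "connected_graph V E \<longleftrightarrow> (\<forall>u\<in>V. \<forall>v\<in>V. (u, v) \<in> E\<^sup>*)"

definition is_cycle :: "('a \<times> 'a) set \<Rightarrow> 'a list \<Rightarrow> bool" where
  "is_cycle E cs \<longleftrightarrow> length cs \<ge> 3 \<and> distinct cs
     \<and> (\<forall>i. Suc i < length cs \<longrightarrow> (cs ! i, cs ! Suc i) \<in> E)
     \<and> (last cs, hd cs) \<in> E"

definition is_tree :: "'a set \<Rightarrow> ('a \<times> 'a) set \<Rightarrow> bool" where
  "is_tree V E \<longleftrightarrow> simple_graph V E \<and> V \<noteq> {} \<and> connected_graph V E
     \<and> (\<nexists>cs. is_cycle E cs)"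

definition nbhd :: "('a \<times> 'a) set \<Rightarrow> 'a \<Rightarrow> 'a set" where
  "nbhd E v = {u. (u, v) \<in> E}"

definition nbhd_set :: "('a \<times> 'a) set \<Rightarrow> 'a set \<Rightarrow> 'a set" where
  "nbhd_set E D = (\<Union>v\<in>D. nbhd E v)"

definition is_leaf :: "('a \<times> 'a) set \<Rightarrow> 'a \<Rightarrow> bool" where
  "is_leaf E v \<longleftrightarrow> card (nbhd E v) = 1"

definition vheight :: "('a \<times> 'a) set \<Rightarrow> 'a \<Rightarrow> nat" where
  "vheight E v = (LEAST n. \<exists>l. is_leaf E l \<and> (v, l) \<in> E ^^ n)"

definition level :: "'a set \<Rightarrow> ('a \<times> 'a) set \<Rightarrow> nat \<Rightarrow> 'a set" where
  "level V E k = {v \<in> V. vheight E v = k}"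

definition tree_height :: "'a set \<Rightarrow> ('a \<times> 'a) set \<Rightarrow> nat" where
  "tree_height V E = Max (vheight E ` V)"

definition balanced :: "'a set \<Rightarrow> ('a \<times> 'a) set \<Rightarrow> bool" where
  "balanced V E \<longleftrightarrow> (\<forall>(u, v)\<in>E. vheight E u \<noteq> vheight E v)"

definition is_TD_set :: "'a set \<Rightarrow> ('a \<times> 'a) set \<Rightarrow> 'a set \<Rightarrow> bool" where
  "is_TD_set V E D \<longleftrightarrow> D \<subseteq> V \<and> nbhd_set E D = V"

definition minimal_TD_set :: "'a set \<Rightarrow> ('a \<times> 'a) set \<Rightarrow> 'a set \<Rightarrow> bool" where
  "minimal_TD_set V E D \<longleftrightarrow> is_TD_set V E D \<and> (\<forall>D'. D' \<subset> D \<longrightarrow> \<not> is_TD_set V E D')"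

definition unmixed :: "'a set \<Rightarrow> ('a \<times> 'a) set \<Rightarrow> bool" where
  "unmixed V E \<longleftrightarrow> (\<forall>D1 D2. minimal_TD_set V E D1 \<and> minimal_TD_set V E D2 \<longrightarrow> card D1 = card D2)"

end

theory Submission
  imports Defs
begin

lemma remove_lemma:
  assumes "minimal_TD_set V E D" "x \<in> D" "\<forall>y. (y,x)\<in>E \<longrightarrow> (\<exists>z\<in>D. z\<noteq>x \<and> (y,z)\<in>E)"
  shows False
proof -
  have td: "D \<subseteq> V" "nbhd_set E D = V" using assms(1) by (auto simp: minimal_TD_set_def is_TD_set_def)
  have "is_TD_set V E (D - {x})"
    unfolding is_TD_set_def
  proof
    show "D - {x} \<subseteq> V" using td by auto
    show "nbhd_set E (D - {x}) = V"
    proof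
      show "nbhd_set E (D-{x}) \<subseteq> V" using td unfolding nbhd_set_def by auto
      show "V \<subseteq> nbhd_set E (D-{x})"
      proof
        fix y assume "y\<in>V"
        then have "y \<in> nbhd_set E D" using td(2) by simp
        then obtain z where "z\<in>D" "(y,z)\<in>E" by (auto simp: nbhd_set_def nbhd_def)
        then show "y \<in> nbhd_set E (D-{x})" using assms(3)
          by (cases "z=x") (auto simp: nbhd_set_def nbhd_def)
      qed
    qed
  qed
  moreover have "D - {x} \<subset> D" using assms(2) by auto
  ultimately show False using assms(1) unfolding minimal_TD_set_def by blast
qed

theorem theorem3p36:
  fixes V :: "'a set" and E :: "('a \<times> 'a) set"
  assumes "is_tree V E"
    and "balanced V E"
    and "tree_height V E = 3"
    and "\<forall>u\<in>level V E 2. card (nbhd E u \<inter> level V E 1) = 1"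
    and "\<forall>s\<in>level V E 1. card (nbhd E s \<inter> level V E 2) \<le> 1"
  shows "unmixed V E"
proof -
  from assms(1) have fin: "finite V" and EV: "E \<subseteq> V\<times>V" and symE: "sym E" and Vne: "V \<noteq> {}"
    and conn: "connected_graph V E"
    by (auto simp: is_tree_def simple_graph_def)
  have symE': "(v,u)\<in>E" if "(u,v)\<in>E" for u v using symE that by (auto dest: symD)
  define h where "h = vheight E"
  have lev: "level V E k = {v\<in>V. h v = k}" for k by (simp add: level_def h_def)
  show ?thesis
  proof (cases "\<exists>l. is_leaf E l")
    case False
    have "E = {}"
    proof (rule ccontr)
      assume "E \<noteq> {}" then obtain u v where "(u,v)\<in>E" by auto
      moreover have "vheight E u = vheight E v" using False by (simp add: vheight_def)
      ultimately show False using assms(2) unfolding balanced_def by auto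
    qed
    then have "\<not> is_TD_set V E D" for D using Vne by (auto simp: is_TD_set_def nbhd_set_def nbhd_def)
    then show ?thesis by (auto simp: unmixed_def minimal_TD_set_def)
  next
    case True
    then obtain l0 where l0: "is_leaf E l0" by auto
    have leafnb: "\<exists>s. nbhd E l = {s}" if "is_leaf E l" for l
      using that by (auto simp: is_leaf_def card_1_singleton_iff)
    obtain s0 where "nbhd E l0 = {s0}" using leafnb l0 by blast
    then have "(s0,l0) \<in> E" by (auto simp: nbhd_def)
    then have "l0 \<in> V" using EV by auto
    have reach: "\<exists>l. is_leaf E l \<and> (v,l) \<in> E^^(h v)" if "v\<in>V" for v
    proof -
      have "(v,l0)\<in>E\<^sup>*" using conn that \<open>l0\<in>V\<close> by (auto simp: connected_graph_def)
      then obtain n where "(v,l0)\<in>E^^n" using rtrancl_power by blast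
      then have "\<exists>n l. is_leaf E l \<and> (v,l) \<in> E^^n" using l0 by blast
      then show ?thesis unfolding h_def vheight_def by (rule LeastI_ex)
    qed
    have hle: "h v \<le> n" if "is_leaf E l" "(v,l)\<in>E^^n" for v l n
      unfolding h_def vheight_def using that by (intro Least_le) blast
    have adj: "h u \<le> Suc (h v)" if "(u,v)\<in>E" for u v
    proof -
      from that EV have "v\<in>V" by auto
      from reach[OF this] obtain l where "is_leaf E l" "(v,l)\<in>E^^(h v)" by auto
      then have "(u,l) \<in> E^^(Suc (h v))" using that by (meson relpow_Suc_I2)
      then show ?thesis using hle \<open>is_leaf E l\<close> by blast
    qed
    have adj2: "h u = Suc (h v) \<or> h v = Suc (h u)" if "(u,v)\<in>E" for u v
    proof -
      have "(v,u)\<in>E" using symE' that .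
      have "h u \<noteq> h v" using assms(2) that unfolding balanced_def h_def by auto
      with adj[OF that] adj[OF \<open>(v,u)\<in>E\<close>] show ?thesis by linarith
    qed
    have le3: "h v \<le> 3" if "v\<in>V" for v
      using assms(3) fin that unfolding tree_height_def h_def by (metis Max_ge finite_imageI imageI)
    have h0: "is_leaf E v" if "v\<in>V" "h v = 0" for v
      using reach[OF that(1)] that(2) by auto
    have h1: "\<exists>l. is_leaf E l \<and> (s,l)\<in>E" if "s\<in>V" "h s = 1" for s
      using reach[OF that(1)] that(2) by (simp add: relpow_1)
    have key: "card D = 2 * card (level V E 1)" if D: "minimal_TD_set V E D" for D
    proof -
      let ?L1 = "level V E 1"
      have DV: "D \<subseteq> V" and td: "nbhd_set E D = V" using D by (auto simp: minimal_TD_set_def is_TD_set_def)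
      have dom: "\<exists>z\<in>D. (y,z)\<in>E" if "y\<in>V" for y
      proof -
        have "y \<in> nbhd_set E D" using td that by simp
        then show ?thesis by (auto simp: nbhd_set_def nbhd_def)
      qed
      have L1D: "?L1 \<subseteq> D"
      proof
        fix s assume "s \<in> ?L1"
        then have "s\<in>V" "h s = 1" by (auto simp: lev)
        then obtain l where l: "is_leaf E l" "(s,l)\<in>E" using h1 by blast
        then have "l\<in>V" using EV by auto
        then obtain z where "z\<in>D" "(l,z)\<in>E" using dom by blast
        obtain s' where "nbhd E l = {s'}" using leafnb l by blast
        moreover have "s \<in> nbhd E l" "z \<in> nbhd E l" using l \<open>(l,z)\<in>E\<close> symE' by (auto simp: nbhd_def)
        ultimately show "s\<in>D" using \<open>z\<in>D\<close> by auto
      qed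
      have p2: "\<exists>z. nbhd E u \<inter> ?L1 = {z}" if "u\<in>level V E 2" for u
        using assms(4) that card_1_singleton_iff by (metis One_nat_def)
      have no3: "h w \<noteq> 3" if "w\<in>D" for w
      proof
        assume "h w = 3"
        show False
        proof (rule remove_lemma[OF D that], intro allI impI)
          fix y assume "(y,w)\<in>E"
          then have "y\<in>V" using EV by auto
          have "h y = 2" using adj2[OF \<open>(y,w)\<in>E\<close>] le3[OF \<open>y\<in>V\<close>] \<open>h w = 3\<close> by auto
          then obtain z where "nbhd E y \<inter> ?L1 = {z}" using p2 \<open>y\<in>V\<close> by (auto simp: lev)
          then have "z\<in>?L1" "(z,y)\<in>E" by (auto simp: nbhd_def)
          moreover have "z \<in> D" using \<open>z\<in>?L1\<close> L1D by blast
          moreover have "z \<noteq> w" using \<open>z\<in>?L1\<close> \<open>h w=3\<close> by (auto simp: lev)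
          ultimately show "\<exists>z\<in>D. z\<noteq>w \<and> (y,z)\<in>E" using symE' by blast
        qed
      qed
      define A where "A = D - ?L1"
      have Ah: "x\<in>V \<and> (h x = 0 \<or> h x = 2)" if "x\<in>A" for x
      proof -
        have "x\<in>D" "x \<notin> ?L1" using that A_def by auto
        then have "x\<in>V" "h x \<noteq> 1" "h x \<noteq> 3" using DV no3 by (auto simp: lev)
        with le3[OF \<open>x\<in>V\<close>] show ?thesis by auto
      qed
      define f where "f x = the_elem (nbhd E x \<inter> ?L1)" for x
      have fA: "nbhd E x \<inter> ?L1 = {f x}" if "x\<in>A" for x
      proof -
        have xV: "x \<in> V" and hx: "h x = 0 \<or> h x = 2" using Ah[OF that] by auto
        have "\<exists>z. nbhd E x \<inter> ?L1 = {z}"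
        proof (cases "h x = 0")
          case True
          then have "is_leaf E x" using h0 xV by blast
          then obtain s where s: "nbhd E x = {s}" using leafnb by blast
          then have sx: "(s,x)\<in>E" unfolding nbhd_def by blast
          then have "s\<in>V" using EV by blast
          have "h s = 1" using adj2[OF sx] True by linarith
          have "nbhd E x \<inter> ?L1 = {s}" using s \<open>s\<in>V\<close> \<open>h s = 1\<close> unfolding lev by blast
          then show ?thesis by blast
        next
          case False
          then have "x \<in> level V E 2" using xV hx unfolding lev by simp
          then show ?thesis using p2 by blast
        qed
        then obtain z where z: "nbhd E x \<inter> ?L1 = {z}" by blast
        then have "f x = z" unfolding f_def by simp
        then show ?thesis using z by simp
      qed
      have fL: "f x \<in> ?L1" "(f x, x) \<in> E" if "x\<in>A" for x
        using fA[OF that] unfolding nbhd_def by blast+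
      have gen: "False" if "a\<in>A" "b\<in>A" "a\<noteq>b" "h a = 0" "f a = f b" for a b
      proof -
        have "a \<in> V" using Ah[OF that(1)] by blast
        have "is_leaf E a" using h0 \<open>a\<in>V\<close> that(4) by blast
        then obtain s where s: "nbhd E a = {s}" using leafnb by blast
        have sa: "f a = s" using s fL(2)[OF that(1)] unfolding nbhd_def by blast
        have bD: "b \<in> D" using that(2) A_def by blast
        have sb: "(s, b) \<in> E" using fL(2)[OF that(2)] that(5) sa by simp
        show False
        proof (rule remove_lemma[OF D, of a])
          show "a\<in>D" using that(1) A_def by blast
          show "\<forall>y. (y, a) \<in> E \<longrightarrow> (\<exists>z\<in>D. z \<noteq> a \<and> (y, z) \<in> E)"
          proof (intro allI impI)
            fix y assume "(y,a)\<in>E"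
            then have "y = s" using s unfolding nbhd_def by blast
            then show "\<exists>z\<in>D. z \<noteq> a \<and> (y, z) \<in> E" using bD that(3) sb by auto
          qed
        qed
      qed
      have "bij_betw f A ?L1"
        unfolding bij_betw_def
      proof
        show "inj_on f A"
        proof (rule inj_onI, rule ccontr)
          fix x y assume xA: "x\<in>A" and yA: "y\<in>A" and fe: "f x = f y" and ne: "x\<noteq>y"
          have hx: "h x = 0 \<or> h x = 2" and hy: "h y = 0 \<or> h y = 2" using Ah xA yA by blast+
          show False
          proof (cases "h x = 0")
            case True show False using gen[OF xA yA ne True fe] by blast
          next
            case F1: False
            show False
            proof (cases "h y = 0")
              case True then show False using gen[OF yA xA] ne fe True by metis
            next
              case False
              have h22: "h x = 2" "h y = 2" using hx hy F1 False by auto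
              let ?S = "nbhd E (f x) \<inter> level V E 2"
              have c: "card ?S \<le> Suc 0" using assms(5) fL(1)[OF xA] by simp
              have "finite ?S" using fin unfolding lev by simp
              moreover have "x \<in> ?S"
                using h22 symE'[OF fL(2)[OF xA]] Ah[OF xA] unfolding nbhd_def lev by blast
              moreover have "y \<in> ?S"
                using h22 symE'[OF fL(2)[OF yA]] fe Ah[OF yA] unfolding nbhd_def lev by simp
              ultimately show False using c ne card_le_Suc0_iff_eq by blast
            qed
          qed
        qed
        show "f ` A = ?L1"
        proof
          show "f ` A \<subseteq> ?L1" using fL(1) by blast
          show "?L1 \<subseteq> f ` A"
          proof
            fix s assume s: "s \<in> ?L1"
            then have "s\<in>V" "h s = 1" unfolding lev by simp_all
            then obtain z where "z\<in>D" "(s,z)\<in>E" using dom by blast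
            then have "h z = 0 \<or> h z = 2" using adj2[OF \<open>(s,z)\<in>E\<close>] \<open>h s = 1\<close> by linarith
            then have zA: "z \<in> A" using \<open>z\<in>D\<close> unfolding A_def lev by auto
            moreover have "s \<in> nbhd E z \<inter> ?L1" using s \<open>(s,z)\<in>E\<close> unfolding nbhd_def by blast
            ultimately have "s = f z" using fA[OF zA] by blast
            then show "s \<in> f ` A" using zA by blast
          qed
        qed
      qed
      then have cA: "card A = card ?L1" by (rule bij_betw_same_card)
      have "D = ?L1 \<union> A" "?L1 \<inter> A = {}" using L1D A_def by auto
      moreover have "finite D" using DV fin finite_subset by blast
      ultimately have "card D = card ?L1 + card A"
        by (metis card_Un_disjoint finite_Un)
      then show ?thesis using cA by simp
    qed
    show ?thesis unfolding unmixed_def using key by auto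
  qed
qed

end
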